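(* A matrix scheme $(\Theta,D)$ contains uncertainty if and only if there exist $d_1,d_2\in D$ and $\theta,\theta'\in\Theta$ such that $d_1(\theta)<d_2(\theta)$ and $d_2(\theta')<d_1(\theta')$.
   Context: A preference relation on a set $X$ is a binary relation $\prec$ on $X$ that is asymmetric ($x\prec y \Rightarrow$ not $y\prec x$) and negatively transitive (not $x\prec y$ and not $y\prec z$ $\Rightarrow$ not $x\prec z$). A matrix scheme is a pair $(\Theta,D)$ where $\Theta$ is an arbitrary nonempty set and $D$ is a set of real-valued functions on $\Theta$. Domination on $D$ is the relation $\prec$ defined by: $d_1\prec d_2$ iff $d_1(\theta)\le d_2(\theta)$ for all $\theta\in\Theta$ and $d_1(\theta^* )<d_2(\theta^* )$ for some $\theta^*\in\Theta$. A projection of preference of consequences in $(\Theta,D)$ is a preference relation $\prec^P$ on $D$ such that $d_1\prec d_2\Rightarrow d_1\prec^P d_2$ for all $d_1,d_2\in D$. The matrix scheme $(\Theta,D)$ contains uncertainty if the projection of preference of consequences in $(\Theta,D)$ is not unique (i.e. there are at least two distinct projections). *)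

theory Defs
  imports Complex_Main
begin

definition preference_relation :: "'b set \<Rightarrow> ('b \<times> 'b) set \<Rightarrow> bool" where
  "preference_relation X R \<longleftrightarrow> R \<subseteq> X \<times> X \<and>
     (\<forall>x\<in>X. \<forall>y\<in>X. (x, y) \<in> R \<longrightarrow> (y, x) \<notin> R) \<and>
     (\<forall>x\<in>X. \<forall>y\<in>X. \<forall>z\<in>X. (x, y) \<notin> R \<and> (y, z) \<notin> R \<longrightarrow> (x, z) \<notin> R)"

text \<open>Matrix scheme: the parameter set \<Theta> is the (nonempty) type 'a; D is a set of
  real-valued functions on it. Domination:\<close>
definition dominates :: "('a \<Rightarrow> real) \<Rightarrow> ('a \<Rightarrow> real) \<Rightarrow> bool" where
  "dominates d1 d2 \<longleftrightarrow> (\<forall>\<theta>. d1 \<theta> \<le> d2 \<theta>) \<and> (\<exists>\<theta>. d1 \<theta> < d2 \<theta>)"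

definition projection_of_preference :: "('a \<Rightarrow> real) set \<Rightarrow> (('a \<Rightarrow> real) \<times> ('a \<Rightarrow> real)) set \<Rightarrow> bool" where
  "projection_of_preference D P \<longleftrightarrow> preference_relation D P \<and>
     (\<forall>d1\<in>D. \<forall>d2\<in>D. dominates d1 d2 \<longrightarrow> (d1, d2) \<in> P)"

definition contains_uncertainty :: "('a \<Rightarrow> real) set \<Rightarrow> bool" where
  "contains_uncertainty D \<longleftrightarrow>
     (\<exists>P1 P2. projection_of_preference D P1 \<and> projection_of_preference D P2 \<and> P1 \<noteq> P2)"

end

theory Submission
  imports Defs
begin

definition lexr :: "'a rel \<Rightarrow> ('a\<Rightarrow>real) \<Rightarrow> ('a\<Rightarrow>real) \<Rightarrow> bool" where
  "lexr r d e \<longleftrightarrow> (\<exists>t. d t < e t \<and> (\<forall>s. (s,t)\<in>r \<and> s\<noteq>t \<longrightarrow> d s = e s))"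

lemma gen_proj:
  fixes Q :: "('a\<Rightarrow>real) \<Rightarrow> ('a\<Rightarrow>real) \<Rightarrow> bool"
  assumes irr: "\<And>d. \<not> Q d d" and trq: "\<And>d e f. Q d e \<Longrightarrow> Q e f \<Longrightarrow> Q d f"
    and totq: "\<And>d e. d \<noteq> e \<Longrightarrow> Q d e \<or> Q e d"
    and dom: "\<And>d e. dominates d e \<Longrightarrow> Q d e"
  shows "projection_of_preference D {(d,e). d \<in> D \<and> e \<in> D \<and> Q d e}"
  unfolding projection_of_preference_def preference_relation_def
proof (intro conjI ballI impI)
  fix x y z assume "x \<in> D" "y \<in> D" "z \<in> D"
    "(x, y) \<notin> {(d,e). d \<in> D \<and> e \<in> D \<and> Q d e} \<and> (y, z) \<notin> {(d,e). d \<in> D \<and> e \<in> D \<and> Q d e}"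
  then have "\<not> Q x y" "\<not> Q y z" by auto
  then have "x = y \<or> Q y x" "y = z \<or> Q z y" using totq by blast+
  then have "x = z \<or> Q z x" using trq by blast
  then have "\<not> Q x z" using irr trq by blast
  then show "(x, z) \<notin> {(d,e). d \<in> D \<and> e \<in> D \<and> Q d e}" by auto
next
  show "{(d,e). d \<in> D \<and> e \<in> D \<and> Q d e} \<subseteq> D \<times> D" by auto
next
  fix x y assume "(x, y) \<in> {(d,e). d \<in> D \<and> e \<in> D \<and> Q d e}"
  then have "Q x y" by simp
  then have "\<not> Q y x" using irr trq by blast
  then show "(y, x) \<notin> {(d,e). d \<in> D \<and> e \<in> D \<and> Q d e}" by simp
next
  fix x y assume "x \<in> D" "y \<in> D" "dominates x y"
  then show "(x, y) \<in> {(d,e). d \<in> D \<and> e \<in> D \<and> Q d e}" using dom by simp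
qed

locale wo_ctx =
  fixes r :: "'a rel"
  assumes tr: "trans r" and an: "antisym r"
    and tot: "\<And>s t. s \<noteq> t \<Longrightarrow> (s,t)\<in>r \<or> (t,s)\<in>r"
    and wfr: "wf (r - Id)"
begin

lemma lex_irrefl: "\<not> lexr r d d"
  by (auto simp: lexr_def)

lemma lex_trans:
  assumes "lexr r d e" "lexr r e f" shows "lexr r d f"
proof -
  obtain t1 where t1: "d t1 < e t1" "\<forall>s. (s,t1)\<in>r \<and> s\<noteq>t1 \<longrightarrow> d s = e s"
    using assms(1) by (auto simp: lexr_def)
  obtain t2 where t2: "e t2 < f t2" "\<forall>s. (s,t2)\<in>r \<and> s\<noteq>t2 \<longrightarrow> e s = f s"
    using assms(2) by (auto simp: lexr_def)
  consider "t1 = t2" | "t1 \<noteq> t2" "(t1,t2)\<in>r" | "t1 \<noteq> t2" "(t2,t1)\<in>r" using tot by blast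
  then show ?thesis
  proof cases
    case 1
    have "d t1 < f t1" using t1(1) t2(1) 1 by simp
    moreover have "\<forall>s. (s,t1)\<in>r \<and> s\<noteq>t1 \<longrightarrow> d s = f s"
      using t1(2) t2(2) 1 by simp
    ultimately show ?thesis unfolding lexr_def by blast
  next
    case 2
    have "e t1 = f t1" using t2(2) 2 by blast
    then have "d t1 < f t1" using t1(1) by simp
    moreover have "\<forall>s. (s,t1)\<in>r \<and> s\<noteq>t1 \<longrightarrow> d s = f s"
    proof (intro allI impI)
      fix s assume s: "(s,t1)\<in>r \<and> s\<noteq>t1"
      have "(s,t2)\<in>r" using s 2 tr by (meson transD)
      moreover have "s \<noteq> t2" using s 2 an by (metis antisymD)
      ultimately have "e s = f s" using t2(2) by blast
      moreover have "d s = e s" using t1(2) s by blast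
      ultimately show "d s = f s" by simp
    qed
    ultimately show ?thesis unfolding lexr_def by blast
  next
    case 3
    have "d t2 = e t2" using t1(2) 3 by blast
    then have "d t2 < f t2" using t2(1) by simp
    moreover have "\<forall>s. (s,t2)\<in>r \<and> s\<noteq>t2 \<longrightarrow> d s = f s"
    proof (intro allI impI)
      fix s assume s: "(s,t2)\<in>r \<and> s\<noteq>t2"
      have "(s,t1)\<in>r" using s 3 tr by (meson transD)
      moreover have "s \<noteq> t1" using s 3 an by (metis antisymD)
      ultimately have "d s = e s" using t1(2) by blast
      moreover have "e s = f s" using t2(2) s by blast
      ultimately show "d s = f s" by simp
    qed
    ultimately show ?thesis unfolding lexr_def by blast
  qed
qed

lemma lex_total:
  assumes "d \<noteq> e" shows "lexr r d e \<or> lexr r e d"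
proof -
  obtain x where x: "d x \<noteq> e x" using assms by auto
  obtain z where z: "d z \<noteq> e z" "\<forall>y. (y,z)\<in>r - Id \<longrightarrow> d y = e y"
    using wfr[unfolded wf_eq_minimal, rule_format, of x "{t. d t \<noteq> e t}"] x by blast
  show ?thesis
  proof (cases "d z < e z")
    case True then show ?thesis using z unfolding lexr_def by blast
  next
    case False then have "e z < d z" using z by auto
    then show ?thesis using z unfolding lexr_def by (metis DiffI IdD)
  qed
qed

definition P :: "'a \<Rightarrow> ('a\<Rightarrow>real) set \<Rightarrow> (('a\<Rightarrow>real) \<times> ('a\<Rightarrow>real)) set" where
  "P th D = {(d,e). d \<in> D \<and> e \<in> D \<and> (d th < e th \<or> (d th = e th \<and> lexr r d e))}"

lemma P_proj: "projection_of_preference D (P th D)"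
proof -
  let ?Q = "\<lambda>d e. d th < e th \<or> (d th = e th \<and> lexr r d e)"
  have irr: "\<not> ?Q d d" for d using lex_irrefl by auto
  have trq: "?Q d e \<Longrightarrow> ?Q e f \<Longrightarrow> ?Q d f" for d e f
  proof -
    assume a: "?Q d e" and b: "?Q e f"
    show "?Q d f"
    proof (cases "d th < e th")
      case True then show ?thesis using b by auto
    next
      case False
      then have de: "d th = e th" "lexr r d e" using a by auto
      show ?thesis
      proof (cases "e th < f th")
        case True then show ?thesis using de by auto
      next
        case False
        then have "e th = f th" "lexr r e f" using b by auto
        then show ?thesis using de lex_trans by auto
      qed
    qed
  qed
  have totq: "d \<noteq> e \<Longrightarrow> ?Q d e \<or> ?Q e d" for d e
    using lex_total[of d e] by (cases "d th < e th"; cases "e th < d th") auto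
  have dom: "dominates d e \<Longrightarrow> ?Q d e" for d e
  proof -
    assume h: "dominates d e"
    then have "d \<noteq> e" unfolding dominates_def by auto
    then have "lexr r d e \<or> lexr r e d" using lex_total by blast
    moreover have "\<not> lexr r e d"
    proof
      assume "lexr r e d"
      then obtain t where "e t < d t" unfolding lexr_def by blast
      moreover have "d t \<le> e t" using h unfolding dominates_def by blast
      ultimately show False by simp
    qed
    moreover have "d th \<le> e th" using h unfolding dominates_def by blast
    ultimately show "?Q d e" by (cases "d th < e th") auto
  qed
  show ?thesis unfolding P_def
    by (rule gen_proj[where Q="?Q" and D=D, OF irr trq totq dom])
qed

end

lemma exists_wo: "\<exists>r::'a rel. wo_ctx r"
proof -
  obtain r :: "'a rel" where r: "Well_order r" "Field r = UNIV"
    using well_ordering by (elim exE conjE)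
  interpret w: wo_rel r using r(1) by (simp add: wo_rel_def)
  have t: "\<And>s t. s \<noteq> t \<Longrightarrow> (s,t)\<in>r \<or> (t,s)\<in>r" using w.TOTALS r(2) by blast
  have "wo_ctx r"
    by (rule wo_ctx.intro[OF w.TRANS w.ANTISYM t w.WF])
  then show ?thesis by (rule exI)
qed

theorem mainTheorem5:
  fixes D :: "('a \<Rightarrow> real) set"
  shows "contains_uncertainty D \<longleftrightarrow>
    (\<exists>d1\<in>D. \<exists>d2\<in>D. \<exists>\<theta> \<theta>'. d1 \<theta> < d2 \<theta> \<and> d2 \<theta>' < d1 \<theta>')"
proof
  assume "contains_uncertainty D"
  then obtain P1 P2 where p: "projection_of_preference D P1" "projection_of_preference D P2" "P1 \<noteq> P2"
    unfolding contains_uncertainty_def by blast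
  show "\<exists>d1\<in>D. \<exists>d2\<in>D. \<exists>\<theta> \<theta>'. d1 \<theta> < d2 \<theta> \<and> d2 \<theta>' < d1 \<theta>'"
  proof (rule ccontr)
    assume n: "\<not> (\<exists>d1\<in>D. \<exists>d2\<in>D. \<exists>\<theta> \<theta>'. d1 \<theta> < d2 \<theta> \<and> d2 \<theta>' < d1 \<theta>')"
    have cmp: "a s \<le> b s" if ab: "a \<in> D" "b \<in> D" "a t < b t" for a b t s
    proof (rule ccontr)
      assume "\<not> a s \<le> b s"
      then have "b s < a s" by simp
      then show False using n ab by blast
    qed
    have eq: "P = {(d,e). d\<in>D \<and> e\<in>D \<and> dominates d e}" if pp: "projection_of_preference D P" for P
    proof (rule set_eqI)
      fix x :: "('a \<Rightarrow> real) \<times> ('a \<Rightarrow> real)"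
      obtain d e where x: "x = (d,e)" by (cases x)
      have sub: "P \<subseteq> D \<times> D" and as: "\<forall>x\<in>D. \<forall>y\<in>D. (x, y) \<in> P \<longrightarrow> (y, x) \<notin> P"
        and ext: "\<forall>d1\<in>D. \<forall>d2\<in>D. dominates d1 d2 \<longrightarrow> (d1, d2) \<in> P"
      proof -
        have pr: "preference_relation D P" and e: "\<forall>d1\<in>D. \<forall>d2\<in>D. dominates d1 d2 \<longrightarrow> (d1, d2) \<in> P"
          using pp unfolding projection_of_preference_def by simp_all
        show "P \<subseteq> D \<times> D" using pr unfolding preference_relation_def by (elim conjE)
        show "\<forall>x\<in>D. \<forall>y\<in>D. (x, y) \<in> P \<longrightarrow> (y, x) \<notin> P"
          using pr unfolding preference_relation_def by (elim conjE)
        show "\<forall>d1\<in>D. \<forall>d2\<in>D. dominates d1 d2 \<longrightarrow> (d1, d2) \<in> P" by (rule e)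
      qed
      have "(d,e) \<in> P \<longleftrightarrow> d\<in>D \<and> e\<in>D \<and> dominates d e"
      proof
        assume de: "(d,e) \<in> P"
        have dD: "d \<in> D" and eD: "e \<in> D" using de sub by auto
        have "d \<noteq> e" using as de dD by blast
        then obtain t where t: "d t \<noteq> e t" by auto
        have "dominates d e"
        proof (cases "d t < e t")
          case True
          then have "\<forall>s. d s \<le> e s" using cmp dD eD by blast
          then show ?thesis unfolding dominates_def using True by blast
        next
          case False
          then have et: "e t < d t" using t by auto
          then have "\<forall>s. e s \<le> d s" using cmp dD eD by blast
          then have "dominates e d" unfolding dominates_def using et by blast
          then have "(e,d) \<in> P" using ext dD eD by blast
          then show ?thesis using as de dD eD by blast
        qed
        then show "d\<in>D \<and> e\<in>D \<and> dominates d e" using dD eD by blast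
      next
        assume "d\<in>D \<and> e\<in>D \<and> dominates d e"
        then show "(d,e) \<in> P" using ext by blast
      qed
      then show "x \<in> P \<longleftrightarrow> x \<in> {(d,e). d\<in>D \<and> e\<in>D \<and> dominates d e}" using x by simp
    qed
    have "P1 = P2" using eq[OF p(1)] eq[OF p(2)] by (rule trans[OF _ sym])
    then show False using p(3) by contradiction
  qed
next
  assume "\<exists>d1\<in>D. \<exists>d2\<in>D. \<exists>\<theta> \<theta>'. d1 \<theta> < d2 \<theta> \<and> d2 \<theta>' < d1 \<theta>'"
  then obtain d1 d2 th th' where h: "d1\<in>D" "d2\<in>D" "d1 th < d2 th" "d2 th' < d1 th'" by blast
  obtain r :: "'a rel" where r: "wo_ctx r" using exists_wo by blast
  interpret wo_ctx r by (rule r)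
  have "(d1,d2) \<in> P th D" using h unfolding P_def by auto
  moreover have "(d1,d2) \<notin> P th' D" using h unfolding P_def by auto
  ultimately have "P th D \<noteq> P th' D" by blast
  moreover have "projection_of_preference D (P th D)" by (rule P_proj)
  moreover have "projection_of_preference D (P th' D)" by (rule P_proj)
  ultimately show "contains_uncertainty D" unfolding contains_uncertainty_def by blast
qed

end
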